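(* For $d\ge1$ let $$A_d=\frac1{d!}\sum_{(i_d,\dots,i_1)\in[m+n]^d}L(e_{i_d})\cdots L(e_{i_1})L(e_{i_1}^\ast)\cdots L(e_{i_d}^\ast).$$ Then $A_d(\varphi)=\varphi$ for every $\varphi\in\overline T_d(V)$.
   Context: Let $m,n\ge 1$ and $V=\mathbb C^{m|n}$ with standard basis $e_1,\dots,e_{m+n}$, where $|e_i|=0$ for $i\le m$ and $|e_i|=1$ for $i>m$; let $e_1^\ast,\dots,e_{m+n}^\ast$ be the dual basis with $|e_i^\ast|=|e_i|$. $[m+n]=\{1,\dots,m+n\}$. All vectors are homogeneous. A pure tensor $v_d\otimes\cdots\otimes v_1\in V^{\otimes d}$ is written $v_d\cdots v_1$ (factors indexed decreasingly from left to right). $\mathfrak S_d$ is the symmetric group on $\{1,\dots,d\}$, $s_i=(i\ i+1)$, $\mathfrak S_\infty=\bigcup_d\mathfrak S_d$, and for $k\ge1$ the group homomorphism $\sigma\mapsto\sigma^{\uparrow k}$ of $\mathfrak S_\infty$ is defined by $s_i^{\uparrow k}=s_{i+k}$. The right action of $\mathfrak S_d$ on $V^{\otimes d}$ is $(v_d\cdots v_1).s_i=(-1)^{|v_i||v_{i+1}|}v_d\cdots v_{i+2}v_iv_{i+1}v_{i-1}\cdots v_1$ (the factors in positions $i,i+1$ are swapped). Set $\overline T_d(V)=V^{\otimes d}\otimes_{\mathbb C\mathfrak S_d}\mathbb C\mathfrak S_\infty$ (so $\overline T_0(V)=\mathbb C\mathfrak S_\infty$) and $\overline T(V)=\bigoplus_{d\ge0}\overline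 T_d(V)$, with the associative product $(u_k\cdots u_1\otimes\tau)\cdot(v_d\cdots v_1\otimes\sigma)=u_k\cdots u_1v_d\cdots v_1\otimes\tau^{\uparrow d}\sigma$. For $\varphi\in\overline T(V)$, $L(\varphi)$ denotes left multiplication by $\varphi$; in particular $L(v)$ for $v\in V$ (identified with $v\otimes 1\in\overline T_1(V)$). For homogeneous $v^\ast\in V^\ast$, $L(v^\ast)$ is the linear map with $L(v^\ast)=0$ on $\overline T_0(V)$ and $$L(v^\ast)(v_d\cdots v_1\otimes\sigma)=\sum_{k=1}^d(-1)^{|v^\ast|(|v_d|+\cdots+|v_{k+1}|)}\langle v^\ast,v_k\rangle\, v_d\cdots\widehat{v_k}\cdots v_1\otimes s_{d-1}s_{d-2}\cdots s_k\,\sigma,$$ where $\widehat{v_k}$ means omission and the product $s_{d-1}\cdots s_k$ is $1$ for $k=d$; $L$ is extended linearly to all of $V^\ast$. *)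

theory Defs
  imports Complex_Main
begin

text \<open>
  Basis of V = C^{m|n}: indices 1..m+n, index i is odd iff m < i.
  A pure tensor of basis vectors v_d ... v_1 (v_k = e_(w!(k-1))) is encoded by the list
  w = [i_1, ..., i_d] (position k of the tensor is w!(k-1)).
  Permutations in S_infinity are bijections of nat fixing 0 with finite support
  (i.e. finitary permutations of {1,2,...}); group product is composition.
  Elements of the free space (before tensoring over C S_d) are functions
  (word, permutation) => complex with finite support; the relation subspace
  relsp is spanned by (w.s_i) (x) sigma - w (x) s_i sigma.
\<close>

type_synonym basis = "nat list \<times> (nat \<Rightarrow> nat)"
type_synonym fr = "basis \<Rightarrow> complex"

definition Sinf :: "(nat \<Rightarrow> nat) set" where
  "Sinf = {\<sigma>. bij \<sigma> \<and> \<sigma> 0 = 0 \<and> finite {j. \<sigma> j \<noteq> j}}"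

definition s :: "nat \<Rightarrow> nat \<Rightarrow> nat" where
  "s i = (\<lambda>j. if j = i then Suc i else if j = Suc i then i else j)"

definition odd_idx :: "nat \<Rightarrow> nat \<Rightarrow> bool" where
  "odd_idx m i = (m < i)"

definition par :: "nat \<Rightarrow> nat \<Rightarrow> nat" where
  "par m i = (if odd_idx m i then 1 else 0)"

definition delta :: "basis \<Rightarrow> fr" where
  "delta b = (\<lambda>c. if c = b then 1 else 0)"

definition lin :: "(basis \<Rightarrow> fr) \<Rightarrow> fr \<Rightarrow> fr" where
  "lin f x = (\<lambda>c. \<Sum>b\<in>{b. x b \<noteq> 0}. x b * f b c)"

fun cyc :: "nat \<Rightarrow> nat \<Rightarrow> (nat \<Rightarrow> nat)" where
  "cyc d k = (if d \<le> k then id else s (d - 1) \<circ> cyc (d - 1) k)"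

text \<open>delete the factor in position k (1-based)\<close>
definition del :: "nat list \<Rightarrow> nat \<Rightarrow> nat list" where
  "del w k = take (k - 1) w @ drop k w"

text \<open>L(e_i): left multiplication by e_i\<close>
definition Lvec :: "nat \<Rightarrow> fr \<Rightarrow> fr" where
  "Lvec i = lin (\<lambda>(w, \<sigma>). delta (w @ [i], \<sigma>))"

definition Lcov :: "nat \<Rightarrow> nat \<Rightarrow> fr \<Rightarrow> fr" where
  "Lcov m j = lin (\<lambda>(w, \<sigma>). \<lambda>c.
      \<Sum>k\<in>{1..length w}.
        (if w ! (k - 1) = j then
           (-1) ^ (par m j * card {l. k < l \<and> l \<le> length w \<and> odd_idx m (w ! (l - 1))})
           * delta (del w k, cyc (length w) k \<circ> \<sigma>) c
         else 0))"

text \<open>L(e_{i_d}) ... L(e_{i_1}) for the list [i_1, ..., i_d]\<close>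
fun Lvecs :: "nat list \<Rightarrow> fr \<Rightarrow> fr" where
  "Lvecs [] = id"
| "Lvecs (i # is) = Lvecs is \<circ> Lvec i"

text \<open>L(e_{i_1}^*) ... L(e_{i_d}^*) for the list [i_1, ..., i_d]\<close>
fun Lcovs :: "nat \<Rightarrow> nat list \<Rightarrow> fr \<Rightarrow> fr" where
  "Lcovs m [] = id"
| "Lcovs m (i # is) = Lcov m i \<circ> Lcovs m is"

definition A :: "nat \<Rightarrow> nat \<Rightarrow> nat \<Rightarrow> fr \<Rightarrow> fr" where
  "A m n d x = (\<lambda>c. (1 / of_nat (fact d)) *
      (\<Sum>is\<in>{is. length is = d \<and> set is \<subseteq> {1..m+n}}. Lvecs is (Lcovs m is x) c))"

text \<open>right action of s_i on a pure tensor: swap positions i, i+1 (1-based)\<close>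
definition swapw :: "nat list \<Rightarrow> nat \<Rightarrow> nat list" where
  "swapw w i = w[i - 1 := w ! i, i := w ! (i - 1)]"

definition relgen :: "nat \<Rightarrow> nat list \<Rightarrow> nat \<Rightarrow> (nat \<Rightarrow> nat) \<Rightarrow> fr" where
  "relgen m w i \<sigma> = (\<lambda>c.
     (-1) ^ (par m (w ! (i - 1)) * par m (w ! i)) * delta (swapw w i, \<sigma>) c
     - delta (w, s i \<circ> \<sigma>) c)"

text \<open>the subspace of relations defining V^{\<otimes>d} \<otimes>_{C S_d} C S_\<infinity> (all d)\<close>
inductive_set relsp :: "nat \<Rightarrow> nat \<Rightarrow> fr set" for m n where
  zero: "(\<lambda>_. 0) \<in> relsp m n"
| step: "r \<in> relsp m n \<Longrightarrow> 1 \<le> i \<Longrightarrow> i < length w \<Longrightarrow> set w \<subseteq> {1..m+n} \<Longrightarrow> \<sigma> \<in> Sinf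
         \<Longrightarrow> (\<lambda>c. r c + a * relgen m w i \<sigma> c) \<in> relsp m n"

definition Tbar_rep :: "nat \<Rightarrow> nat \<Rightarrow> nat \<Rightarrow> fr set" where
  "Tbar_rep m n d = {x. finite {b. x b \<noteq> 0} \<and>
     (\<forall>w \<sigma>. x (w, \<sigma>) \<noteq> 0 \<longrightarrow> length w = d \<and> set w \<subseteq> {1..m+n} \<and> \<sigma> \<in> Sinf)}"

end

theory Submission
  imports Defs
begin


definition spt :: "fr \<Rightarrow> basis set" where "spt x = {b. x b \<noteq> 0}"

lemma s_Sinf: "1 \<le> i \<Longrightarrow> s i \<in> Sinf"
proof -
  assume i: "1 \<le> i"
  have ss: "s i \<circ> s i = id" by (auto simp: s_def fun_eq_iff)
  have "bij (s i)" using ss by (metis o_bij)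
  moreover have "{j. s i j \<noteq> j} \<subseteq> {i, Suc i}" by (auto simp: s_def)
  hence "finite {j. s i j \<noteq> j}" by (rule finite_subset) auto
  moreover have "s i 0 = 0" using i by (simp add: s_def)
  ultimately show ?thesis by (simp add: Sinf_def)
qed

lemma Sinf_comp: "\<sigma> \<in> Sinf \<Longrightarrow> \<tau> \<in> Sinf \<Longrightarrow> \<sigma> \<circ> \<tau> \<in> Sinf"
proof -
  assume a: "\<sigma> \<in> Sinf" "\<tau> \<in> Sinf"
  have "{j. (\<sigma> \<circ> \<tau>) j \<noteq> j} \<subseteq> {j. \<tau> j \<noteq> j} \<union> {j. \<sigma> j \<noteq> j}" by auto
  hence "finite {j. (\<sigma> \<circ> \<tau>) j \<noteq> j}" using a by (auto simp: Sinf_def intro: finite_subset)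
  thus ?thesis using a by (auto simp: Sinf_def bij_comp)
qed

lemma id_Sinf: "id \<in> Sinf" by (simp add: Sinf_def)
lemma id_Sinf': "(\<lambda>a. a) \<in> Sinf" using id_Sinf by (simp add: id_def)

declare cyc.simps[simp del]

lemma cyc_same: "cyc k k = id" by (simp add: cyc.simps)
lemma cyc_Suc: "k \<le> j \<Longrightarrow> cyc (Suc j) k = s j \<circ> cyc j k"
  by (subst cyc.simps) simp

lemma cyc_Sinf: "1 \<le> k \<Longrightarrow> cyc j k \<in> Sinf"
proof (induction j)
  case 0 then show ?case by (simp add: cyc.simps id_Sinf id_Sinf')
next
  case (Suc j)
  show ?case
  proof (cases "Suc j \<le> k")
    case True then show ?thesis by (simp add: cyc.simps id_Sinf id_Sinf')
  next
    case False
    then have "cyc (Suc j) k = s j \<circ> cyc j k" by (simp add: cyc_Suc)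
    moreover have "s j \<circ> cyc j k \<in> Sinf" using Suc False by (intro Sinf_comp s_Sinf) auto
    ultimately show ?thesis by metis
  qed
qed

lemma lin_eq: "finite S \<Longrightarrow> spt x \<subseteq> S \<Longrightarrow> lin f x c = (\<Sum>b\<in>S. x b * f b c)"
  unfolding lin_def spt_def
  by (rule sum.mono_neutral_left) auto

lemma lin_supp: "spt (lin f x) \<subseteq> (\<Union>b\<in>spt x. spt (f b))"
proof
  fix c assume "c \<in> spt (lin f x)"
  then have "(\<Sum>b\<in>{b. x b \<noteq> 0}. x b * f b c) \<noteq> 0" by (simp add: spt_def lin_def)
  then obtain b where "b \<in> {b. x b \<noteq> 0}" "x b * f b c \<noteq> 0" by (rule sum.not_neutral_contains_not_neutral)
  then have "b \<in> spt x" "c \<in> spt (f b)" by (auto simp: spt_def)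
  then show "c \<in> (\<Union>b\<in>spt x. spt (f b))" by blast
qed

lemma supp_delta[simp]: "spt (delta b) = {b}"
  unfolding spt_def delta_def by auto

lemma lin_delta: "lin f (delta b) = f b"
  by (rule ext, subst lin_eq[of "{b}"]) (auto simp: delta_def spt_def)

definition LIN :: "(fr \<Rightarrow> fr) \<Rightarrow> bool" where
  "LIN T \<longleftrightarrow> (\<forall>x. finite (spt x) \<longrightarrow> finite (spt (T x))) \<and>
     (\<forall>x y. finite (spt x) \<longrightarrow> finite (spt y) \<longrightarrow> T (\<lambda>c. x c + y c) = (\<lambda>c. T x c + T y c)) \<and>
     (\<forall>x a. finite (spt x) \<longrightarrow> T (\<lambda>c. a * x c) = (\<lambda>c. a * T x c))"

lemma fin_add: "finite (spt x) \<Longrightarrow> finite (spt y) \<Longrightarrow> finite (spt (\<lambda>c. x c + y c))"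
  by (rule finite_subset[of _ "spt x \<union> spt y"]) (auto simp: spt_def)
lemma fin_smult: "finite (spt x) \<Longrightarrow> finite (spt (\<lambda>c. a * x c))"
  by (rule finite_subset[of _ "spt x"]) (auto simp: spt_def)
lemma fin_zero: "finite (spt (\<lambda>c. 0))" by (simp add: spt_def)
lemma fin_sum: "finite J \<Longrightarrow> (\<And>j. j \<in> J \<Longrightarrow> finite (spt (g j))) \<Longrightarrow> finite (spt (\<lambda>c. \<Sum>j\<in>J. g j c))"
proof (induction J rule: finite_induct)
  case empty then show ?case by (simp add: fin_zero)
next
  case (insert a F)
  then show ?case by (simp add: fin_add)
qed

lemma lin_LIN: "(\<And>b. finite (spt (f b))) \<Longrightarrow> LIN (lin f)"
proof -
  assume fb: "\<And>b. finite (spt (f b))"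
  have 1: "finite (spt (lin f x))" if "finite (spt x)" for x
    by (rule finite_subset[OF lin_supp]) (use that fb in auto)
  have 2: "lin f (\<lambda>c. x c + y c) = (\<lambda>c. lin f x c + lin f y c)"
    if "finite (spt x)" "finite (spt y)" for x y
  proof
    fix c
    let ?S = "spt x \<union> spt y"
    have "lin f (\<lambda>c. x c + y c) c = (\<Sum>b\<in>?S. (x b + y b) * f b c)"
      by (rule lin_eq) (use that in \<open>auto simp: spt_def\<close>)
    also have "\<dots> = (\<Sum>b\<in>?S. x b * f b c) + (\<Sum>b\<in>?S. y b * f b c)"
      by (simp add: distrib_right sum.distrib)
    also have "\<dots> = lin f x c + lin f y c"
      using that by (simp add: lin_eq[of "spt x \<union> spt y"])
    finally show "lin f (\<lambda>c. x c + y c) c = lin f x c + lin f y c" .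
  qed
  have 3: "lin f (\<lambda>c. a * x c) = (\<lambda>c. a * lin f x c)" if "finite (spt x)" for x a
  proof
    fix c
    have "lin f (\<lambda>c. a * x c) c = (\<Sum>b\<in>spt x. (a * x b) * f b c)"
      by (rule lin_eq) (use that in \<open>auto simp: spt_def\<close>)
    also have "\<dots> = a * lin f x c" using that by (simp add: lin_eq sum_distrib_left mult.assoc)
    finally show "lin f (\<lambda>c. a * x c) c = a * lin f x c" .
  qed
  show ?thesis using 1 2 3 by (simp add: LIN_def)
qed

lemma LIN_fin: "LIN T \<Longrightarrow> finite (spt x) \<Longrightarrow> finite (spt (T x))" by (simp add: LIN_def)
lemma LIN_add: "LIN T \<Longrightarrow> finite (spt x) \<Longrightarrow> finite (spt y) \<Longrightarrow> T (\<lambda>c. x c + y c) = (\<lambda>c. T x c + T y c)"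
  by (simp add: LIN_def)
lemma LIN_smult: "LIN T \<Longrightarrow> finite (spt x) \<Longrightarrow> T (\<lambda>c. a * x c) = (\<lambda>c. a * T x c)"
  by (simp add: LIN_def)
lemma LIN_zero: "LIN T \<Longrightarrow> T (\<lambda>c. 0) = (\<lambda>c. 0)"
  using LIN_smult[of T "\<lambda>c. 0" 0] by (simp add: fin_zero)

lemma fin_diff: "finite (spt x) \<Longrightarrow> finite (spt y) \<Longrightarrow> finite (spt (\<lambda>c. x c - y c))"
  by (rule finite_subset[of _ "spt x \<union> spt y"]) (auto simp: spt_def)

lemma LIN_diff: assumes "LIN T" "finite (spt x)" "finite (spt y)"
  shows "T (\<lambda>c. x c - y c) = (\<lambda>c. T x c - T y c)"
proof -
  have "T (\<lambda>c. x c + (\<lambda>c. (-1) * y c) c) = (\<lambda>c. T x c + T (\<lambda>c. (-1) * y c) c)"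
    by (rule LIN_add[OF assms(1,2) fin_smult[OF assms(3)]])
  also have "T (\<lambda>c. (-1) * y c) = (\<lambda>c. (-1) * T y c)" by (rule LIN_smult) (use assms in auto)
  finally show ?thesis by simp
qed

lemma LIN_comp: "LIN T \<Longrightarrow> LIN U \<Longrightarrow> LIN (T \<circ> U)"
  by (simp add: LIN_def)
lemma LIN_id: "LIN id" by (simp add: LIN_def)

lemma LIN_sum: assumes "LIN T" and "finite J" and "\<And>j. j \<in> J \<Longrightarrow> finite (spt (g j))" shows
   "T (\<lambda>c. \<Sum>j\<in>J. g j c) = (\<lambda>c. \<Sum>j\<in>J. T (g j) c)"
  using assms(2,3)
proof (induction J rule: finite_induct)
  case empty then show ?case using assms(1) by (simp add: LIN_zero)
next
  case (insert a F)
  have "T (\<lambda>c. \<Sum>j\<in>insert a F. g j c) = T (\<lambda>c. g a c + (\<Sum>j\<in>F. g j c))"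
    using insert by simp
  also have "\<dots> = (\<lambda>c. T (g a) c + T (\<lambda>c. \<Sum>j\<in>F. g j c) c)"
    by (rule LIN_add[OF assms(1)]) (use insert in \<open>auto intro: fin_sum\<close>)
  finally show ?case using insert by simp
qed

lemma LIN_lincomb: "LIN T \<Longrightarrow> finite J \<Longrightarrow> (\<And>j. j \<in> J \<Longrightarrow> finite (spt (g j))) \<Longrightarrow>
   T (\<lambda>c. \<Sum>j\<in>J. a j * g j c) = (\<lambda>c. \<Sum>j\<in>J. a j * T (g j) c)"
  by (subst LIN_sum) (auto intro: fin_smult simp: LIN_smult)

lemma fin_delta: "finite (spt (delta b))" by simp

lemma LIN_Lvec: "LIN (Lvec i)"
  unfolding Lvec_def by (rule lin_LIN) (auto)

lemma Lvec_delta: "Lvec i (delta (w, \<sigma>)) = delta (w @ [i], \<sigma>)"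
  by (simp add: Lvec_def lin_delta)

lemma Lcov_fb: "spt ((\<lambda>(w, \<sigma>). \<lambda>c.
      \<Sum>k\<in>{1..length w}.
        (if w ! (k - 1) = j then
           (-1) ^ (par m j * card {l. k < l \<and> l \<le> length w \<and> odd_idx m (w ! (l - 1))})
           * delta (del w k, cyc (length w) k \<circ> \<sigma>) c
         else 0)) b) \<subseteq> (\<lambda>k. (del (fst b) k, cyc (length (fst b)) k \<circ> snd b)) ` {1..length (fst b)}"
  by (cases b) (auto simp: spt_def delta_def elim!: sum.not_neutral_contains_not_neutral split: if_splits)

lemma LIN_Lcov: "LIN (Lcov m j)"
  unfolding Lcov_def by (rule lin_LIN, rule finite_subset[OF Lcov_fb]) auto

lemma LIN_Lvecs: "LIN (Lvecs is)"
  by (induction "is") (simp_all only: Lvecs.simps LIN_id LIN_comp LIN_Lvec)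
lemma LIN_Lcovs: "LIN (Lcovs m is)"
  by (induction "is") (simp_all only: Lcovs.simps LIN_id LIN_comp LIN_Lcov)

lemma Lvecs_snoc: "Lvecs (is @ [i]) = Lvec i \<circ> Lvecs is"
  by (induction "is") auto
lemma Lcovs_snoc: "Lcovs m (is @ [i]) = Lcovs m is \<circ> Lcov m i"
  by (induction "is") auto




lemma fin_relgen: "finite (spt (relgen m w i \<sigma>))"
  unfolding relgen_def by (intro fin_diff fin_smult fin_delta)

lemma relsp_fin: "r \<in> relsp m n \<Longrightarrow> finite (spt r)"
proof (induction rule: relsp.induct)
  case zero then show ?case by (rule fin_zero)
next
  case (step r i w \<sigma> a) then show ?case by (intro fin_add fin_smult fin_relgen)
qed

lemma relsp_add: assumes "q \<in> relsp m n" "r \<in> relsp m n" shows "(\<lambda>c. r c + q c) \<in> relsp m n"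
  using assms(1)
proof (induction rule: relsp.induct)
  case zero then show ?case using assms(2) by simp
next
  case (step q i w \<sigma> a)
  have "(\<lambda>c. (r c + q c) + a * relgen m w i \<sigma> c) \<in> relsp m n"
    by (rule relsp.step) (use step in auto)
  then show ?case by (simp add: add.assoc)
qed

lemma relsp_smult: assumes "r \<in> relsp m n" shows "(\<lambda>c. a * r c) \<in> relsp m n"
  using assms
proof (induction rule: relsp.induct)
  case zero then show ?case by (simp add: relsp.zero)
next
  case (step q i w \<sigma> b)
  have "(\<lambda>c. a * q c + (a * b) * relgen m w i \<sigma> c) \<in> relsp m n"
    by (rule relsp.step) (use step in auto)
  then show ?case by (simp add: distrib_left mult.assoc)
qed

lemma relsp_gen: "1 \<le> i \<Longrightarrow> i < length w \<Longrightarrow> set w \<subseteq> {1..m+n} \<Longrightarrow> \<sigma> \<in> Sinf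
  \<Longrightarrow> relgen m w i \<sigma> \<in> relsp m n"
  using relsp.step[OF relsp.zero, of i w m n \<sigma> 1] by simp

lemma relsp_sum: "finite J \<Longrightarrow> (\<And>j. j \<in> J \<Longrightarrow> g j \<in> relsp m n) \<Longrightarrow> (\<lambda>c. \<Sum>j\<in>J. g j c) \<in> relsp m n"
proof (induction J rule: finite_induct)
  case empty then show ?case by (simp add: relsp.zero)
next
  case (insert a F)
  then show ?case using relsp_add[of "\<lambda>c. \<Sum>j\<in>F. g j c" m n "g a"] by simp
qed

lemma relsp_map:
  assumes T: "LIN T" and gen: "\<And>w i \<sigma>. 1 \<le> i \<Longrightarrow> i < length w \<Longrightarrow> set w \<subseteq> {1..m+n} \<Longrightarrow> \<sigma> \<in> Sinf
     \<Longrightarrow> T (relgen m w i \<sigma>) \<in> relsp m n"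
    and r: "r \<in> relsp m n"
  shows "T r \<in> relsp m n"
  using r
proof (induction rule: relsp.induct)
  case zero then show ?case using T by (simp add: LIN_zero relsp.zero)
next
  case (step q i w \<sigma> a)
  have fq: "finite (spt q)" using step relsp_fin by auto
  have eq: "T (\<lambda>c. q c + a * relgen m w i \<sigma> c) = (\<lambda>c. T q c + a * T (relgen m w i \<sigma>) c)"
    using LIN_add[OF T fq fin_smult[OF fin_relgen], of a m w i \<sigma>] LIN_smult[OF T fin_relgen] by simp
  have g: "T (relgen m w i \<sigma>) \<in> relsp m n" using step by (intro gen) auto
  have "(\<lambda>c. T q c + a * T (relgen m w i \<sigma>) c) \<in> relsp m n"
    using relsp_add[OF relsp_smult[OF g] step.IH] by simp
  then show ?case using eq by simp
qed

definition eqv :: "nat \<Rightarrow> nat \<Rightarrow> fr \<Rightarrow> fr \<Rightarrow> bool" where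
  "eqv m n x y \<longleftrightarrow> (\<lambda>c. x c - y c) \<in> relsp m n"

lemma eqv_refl: "eqv m n x x" by (simp add: eqv_def relsp.zero)
lemma eqv_sym: "eqv m n x y \<Longrightarrow> eqv m n y x"
  unfolding eqv_def using relsp_smult[of "\<lambda>c. x c - y c" m n "-1"] by simp
lemma eqv_trans: "eqv m n x y \<Longrightarrow> eqv m n y z \<Longrightarrow> eqv m n x z"
  unfolding eqv_def using relsp_add[of "\<lambda>c. y c - z c" m n "\<lambda>c. x c - y c"] by simp
lemma eqv_smult: "eqv m n x y \<Longrightarrow> eqv m n (\<lambda>c. a * x c) (\<lambda>c. a * y c)"
  unfolding eqv_def using relsp_smult[of "\<lambda>c. x c - y c" m n a] by (simp add: right_diff_distrib)
lemma eqv_sum: "finite J \<Longrightarrow> (\<And>j. j \<in> J \<Longrightarrow> eqv m n (f j) (g j)) \<Longrightarrow>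
   eqv m n (\<lambda>c. \<Sum>j\<in>J. f j c) (\<lambda>c. \<Sum>j\<in>J. g j c)"
  unfolding eqv_def using relsp_sum[of J "\<lambda>j c. f j c - g j c" m n] by (simp add: sum_subtractf)
lemma eqv_eq: "x = y \<Longrightarrow> eqv m n x y" by (simp add: eqv_refl)

lemma eqv_map:
  assumes T: "LIN T" and gen: "\<And>w i \<sigma>. 1 \<le> i \<Longrightarrow> i < length w \<Longrightarrow> set w \<subseteq> {1..m+n} \<Longrightarrow> \<sigma> \<in> Sinf
     \<Longrightarrow> T (relgen m w i \<sigma>) \<in> relsp m n"
    and e: "eqv m n x y" and fx: "finite (spt x)" and fy: "finite (spt y)"
  shows "eqv m n (T x) (T y)"
proof -
  have "T (\<lambda>c. x c - y c) = (\<lambda>c. T x c - T y c)"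
    using T fx fy by (rule LIN_diff)
  moreover have "T (\<lambda>c. x c - y c) \<in> relsp m n"
    using relsp_map[OF T gen] e eqv_def by blast
  ultimately show ?thesis unfolding eqv_def by simp
qed

lemma Lvec_gen: "i \<in> {1..m+n} \<Longrightarrow> 1 \<le> j \<Longrightarrow> j < length w \<Longrightarrow> set w \<subseteq> {1..m+n} \<Longrightarrow> \<sigma> \<in> Sinf
     \<Longrightarrow> Lvec i (relgen m w j \<sigma>) \<in> relsp m n"
proof -
  assume a: "i \<in> {1..m+n}" "1 \<le> j" "j < length w" "set w \<subseteq> {1..m+n}" "\<sigma> \<in> Sinf"
  have sw: "swapw (w @ [i]) j = swapw w j @ [i]"
    using a by (simp add: swapw_def nth_append list_update_append1 less_imp_diff_less)
  have "Lvec i (relgen m w j \<sigma>) = relgen m (w @ [i]) j \<sigma>"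
    unfolding relgen_def sw
    using a by (simp add: LIN_diff[OF LIN_Lvec] LIN_smult[OF LIN_Lvec] fin_smult Lvec_delta
        nth_append)
  also have "\<dots> \<in> relsp m n" using a by (intro relsp_gen) auto
  finally show ?thesis .
qed




definition rot :: "nat list \<Rightarrow> nat \<Rightarrow> nat \<Rightarrow> nat list" where
  "rot w k j = take (k - 1) w @ take (j - k) (drop k w) @ [w ! (k - 1)] @ drop j w"

lemma rot_length: "1 \<le> k \<Longrightarrow> k \<le> j \<Longrightarrow> j \<le> length w \<Longrightarrow> length (rot w k j) = length w"
  by (simp add: rot_def)

lemma rot_nth: assumes "1 \<le> k" "k \<le> j" "j \<le> length w" "p < length w"
  shows "rot w k j ! p = (if p < k - 1 then w ! p else if p < j - 1 then w ! Suc p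
     else if p = j - 1 then w ! (k - 1) else w ! p)"
  using assms by (auto simp: rot_def nth_append min_def)

lemma rot_same: "1 \<le> k \<Longrightarrow> k \<le> length w \<Longrightarrow> rot w k k = w"
  by (rule nth_equalityI) (auto simp: rot_length rot_nth)

lemma rot_full: "1 \<le> k \<Longrightarrow> k \<le> length w \<Longrightarrow> rot w k (length w) = del w k @ [w ! (k - 1)]"
  by (simp add: rot_def del_def)

lemma rot_set: "1 \<le> k \<Longrightarrow> k \<le> j \<Longrightarrow> j \<le> length w \<Longrightarrow> set (rot w k j) \<subseteq> set w"
  unfolding rot_def by (auto dest: in_set_takeD in_set_dropD)

lemma rot_swap: assumes "1 \<le> k" "k \<le> j" "Suc j \<le> length w"
  shows "swapw (rot w k (Suc j)) j = rot w k j"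
    and "rot w k (Suc j) ! (j - 1) = w ! j"
    and "rot w k (Suc j) ! j = w ! (k - 1)"
proof -
  show "rot w k (Suc j) ! (j - 1) = w ! j" using assms by (auto simp: rot_nth)
  show "rot w k (Suc j) ! j = w ! (k - 1)" using assms by (auto simp: rot_nth)
  show "swapw (rot w k (Suc j)) j = rot w k j"
    by (rule nth_equalityI) (use assms in \<open>auto simp: swapw_def rot_length rot_nth nth_list_update\<close>)
qed

definition cnt :: "nat \<Rightarrow> nat list \<Rightarrow> nat \<Rightarrow> nat \<Rightarrow> nat" where
  "cnt m w k j = card {l. k < l \<and> l \<le> j \<and> odd_idx m (w ! (l - 1))}"

lemma cnt_same: "cnt m w k k = 0" by (simp add: cnt_def)

lemma cnt_Suc: assumes "k \<le> j" shows "cnt m w k (Suc j) = cnt m w k j + par m (w ! j)"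
proof -
  let ?A = "{l. k < l \<and> l \<le> j \<and> odd_idx m (w ! (l - 1))}"
  have fin: "finite ?A" by (rule finite_subset[of _ "{..j}"]) auto
  show ?thesis
  proof (cases "odd_idx m (w ! j)")
    case True
    then have "{l. k < l \<and> l \<le> Suc j \<and> odd_idx m (w ! (l - 1))} = insert (Suc j) ?A"
      using assms by (auto simp: le_Suc_eq)
    then show ?thesis using True fin by (simp add: cnt_def par_def)
  next
    case False
    then have "{l. k < l \<and> l \<le> Suc j \<and> odd_idx m (w ! (l - 1))} = ?A"
      using assms by (auto simp: le_Suc_eq)
    then show ?thesis using False by (simp add: cnt_def par_def)
  qed
qed

lemma rot_eqv: assumes k: "1 \<le> k" and kj: "k \<le> j" and jl: "j \<le> length w"
  and ws: "set w \<subseteq> {1..m+n}" and sg: "\<sigma> \<in> Sinf"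
  shows "eqv m n (delta (rot w k j, cyc j k \<circ> \<sigma>))
     (\<lambda>c. (-1) ^ (par m (w ! (k - 1)) * cnt m w k j) * delta (w, \<sigma>) c)"
  using kj jl
proof (induction j rule: dec_induct)
  case base
  then show ?case using k by (intro eqv_eq) (simp add: rot_same cyc_same cnt_same)
next
  case (step j)
  let ?u = "rot w k (Suc j)" and ?\<tau> = "cyc j k \<circ> \<sigma>"
  let ?sg = "(-1::complex) ^ (par m (?u ! (j - 1)) * par m (?u ! j))"
  have tau: "?\<tau> \<in> Sinf" using k sg by (intro Sinf_comp cyc_Sinf)
  have uset: "set ?u \<subseteq> {1..m+n}" using rot_set[of k "Suc j" w] step k ws by auto
  have "relgen m ?u j ?\<tau> \<in> relsp m n"
    by (rule relsp_gen) (use step k tau uset rot_length[of k "Suc j" w] in auto)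
  then have "eqv m n (\<lambda>c. ?sg * delta (swapw ?u j, ?\<tau>) c) (delta (?u, s j \<circ> ?\<tau>))"
    by (simp add: eqv_def relgen_def)
  then have e1: "eqv m n (delta (?u, cyc (Suc j) k \<circ> \<sigma>)) (\<lambda>c. ?sg * delta (rot w k j, ?\<tau>) c)"
    using step k by (simp add: rot_swap(1) cyc_Suc o_assoc eqv_sym)
  have e2: "eqv m n (\<lambda>c. ?sg * delta (rot w k j, ?\<tau>) c)
      (\<lambda>c. ?sg * ((-1) ^ (par m (w ! (k - 1)) * cnt m w k j) * delta (w, \<sigma>) c))"
  proof (rule eqv_smult)
    show "eqv m n (delta (rot w k j, ?\<tau>)) (\<lambda>c. (-1) ^ (par m (w ! (k - 1)) * cnt m w k j) * delta (w, \<sigma>) c)"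
      by (rule step.IH) (use step.prems in simp)
  qed
  have e3: "(\<lambda>c. ?sg * ((-1) ^ (par m (w ! (k - 1)) * cnt m w k j) * delta (w, \<sigma>) c))
     = (\<lambda>c. (-1) ^ (par m (w ! (k - 1)) * cnt m w k (Suc j)) * delta (w, \<sigma>) c)"
  proof -
    have r2: "?u ! (j - 1) = w ! j" and r3: "?u ! j = w ! (k - 1)"
      using rot_swap(2,3)[of k j w] step k by auto
    have c: "cnt m w k (Suc j) = cnt m w k j + par m (w ! j)" using step by (intro cnt_Suc) auto
    show ?thesis unfolding r2 r3 c by (simp add: power_add algebra_simps)
  qed
  show ?case using eqv_trans[OF e1 e2] unfolding e3 .
qed




lemma Tbar_fin: "x \<in> Tbar_rep m n d \<Longrightarrow> finite (spt x)"
  by (simp add: Tbar_rep_def spt_def)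

lemma Tbar_supp: "x \<in> Tbar_rep m n d \<Longrightarrow> (w, \<sigma>) \<in> spt x \<Longrightarrow> length w = d \<and> set w \<subseteq> {1..m+n} \<and> \<sigma> \<in> Sinf"
  by (simp add: Tbar_rep_def spt_def)

lemma TbarI: "finite (spt x) \<Longrightarrow> (\<And>w \<sigma>. (w, \<sigma>) \<in> spt x \<Longrightarrow> length w = d \<and> set w \<subseteq> {1..m+n} \<and> \<sigma> \<in> Sinf)
  \<Longrightarrow> x \<in> Tbar_rep m n d"
  by (auto simp: Tbar_rep_def spt_def)

lemma Lcov_spt: "spt (Lcov m j x) \<subseteq> (\<Union>b\<in>spt x. (\<lambda>k. (del (fst b) k, cyc (length (fst b)) k \<circ> snd b)) ` {1..length (fst b)})"
  unfolding Lcov_def by (rule order_trans[OF lin_supp]) (intro UN_mono order_refl Lcov_fb)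

lemma del_length: "1 \<le> k \<Longrightarrow> k \<le> length w \<Longrightarrow> length (del w k) = length w - 1"
  by (simp add: del_def)
lemma del_set: "set (del w k) \<subseteq> set w"
  by (auto simp: del_def dest: in_set_takeD in_set_dropD)

lemma Lcov_Tbar: assumes "x \<in> Tbar_rep m n (Suc d)" shows "Lcov m i x \<in> Tbar_rep m n d"
proof (rule TbarI)
  show "finite (spt (Lcov m i x))" by (rule LIN_fin[OF LIN_Lcov Tbar_fin[OF assms]])
  fix w' \<tau> assume "(w', \<tau>) \<in> spt (Lcov m i x)"
  then obtain w \<sigma> k where b: "(w, \<sigma>) \<in> spt x" and k: "k \<in> {1..length w}"
     and e: "w' = del w k" "\<tau> = cyc (length w) k \<circ> \<sigma>"
    using Lcov_spt[of m i x] by fastforce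
  have "length w = Suc d" "set w \<subseteq> {1..m+n}" "\<sigma> \<in> Sinf" using Tbar_supp[OF assms b] by auto
  then show "length w' = d \<and> set w' \<subseteq> {1..m+n} \<and> \<tau> \<in> Sinf"
    using k e del_set[of w k] del_length[of k w] by (auto intro!: Sinf_comp cyc_Sinf)
qed

lemma Lcov_delta: "Lcov m i (delta (w, \<sigma>)) = (\<lambda>c. \<Sum>k\<in>{1..length w}.
   (if w ! (k - 1) = i then (-1) ^ (par m (w ! (k - 1)) * cnt m w k (length w)) else 0) *
     delta (del w k, cyc (length w) k \<circ> \<sigma>) c)"
  unfolding Lcov_def lin_delta cnt_def by (auto intro!: sum.cong)

lemma sum_delta_mult: "finite I \<Longrightarrow> a \<in> I \<Longrightarrow> (\<Sum>i\<in>I. (if a = i then t else 0) * g i) = t * (g a :: complex)"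
proof -
  assume "finite I" "a \<in> I"
  have "(\<Sum>i\<in>I. (if a = i then t else 0) * g i) = (\<Sum>i\<in>I. if a = i then t * g i else 0)"
    by (rule sum.cong) auto
  also have "\<dots> = t * g a" using \<open>finite I\<close> \<open>a \<in> I\<close> by (simp add: sum.delta)
  finally show ?thesis .
qed

lemma LIN_sumT: assumes "finite I" "\<And>i. LIN (T i)" shows "LIN (\<lambda>y c. \<Sum>i\<in>I. T i y c)"
proof -
  have 1: "finite (spt (\<lambda>c. \<Sum>i\<in>I. T i x c))" if "finite (spt x)" for x
    by (rule fin_sum[OF assms(1)], rule LIN_fin[OF assms(2) that])
  have 2: "(\<lambda>c. \<Sum>i\<in>I. T i (\<lambda>c. x c + y c) c) = (\<lambda>c. (\<Sum>i\<in>I. T i x c) + (\<Sum>i\<in>I. T i y c))"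
    if "finite (spt x)" "finite (spt y)" for x y
  proof -
    have "T i (\<lambda>c. x c + y c) = (\<lambda>c. T i x c + T i y c)" for i
      using assms(2) that by (rule LIN_add)
    then show ?thesis by (simp add: sum.distrib)
  qed
  have 3: "(\<lambda>c. \<Sum>i\<in>I. T i (\<lambda>c. a * x c) c) = (\<lambda>c. a * (\<Sum>i\<in>I. T i x c))"
    if "finite (spt x)" for x a
  proof -
    have "T i (\<lambda>c. a * x c) = (\<lambda>c. a * T i x c)" for i
      using assms(2) that by (rule LIN_smult)
    then show ?thesis by (simp add: sum_distrib_left)
  qed
  show ?thesis unfolding LIN_def
  proof (intro conjI allI impI)
    fix x assume "finite (spt x)" then show "finite (spt (\<lambda>c. \<Sum>i\<in>I. T i x c))" by (rule 1)
  next
    fix x y assume "finite (spt x)" "finite (spt y)"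
    then show "(\<lambda>c. \<Sum>i\<in>I. T i (\<lambda>c. x c + y c) c) = (\<lambda>c. (\<Sum>i\<in>I. T i x c) + (\<Sum>i\<in>I. T i y c))"
      by (rule 2)
  next
    fix x a assume "finite (spt x)"
    then show "(\<lambda>c. \<Sum>i\<in>I. T i (\<lambda>c. a * x c) c) = (\<lambda>c. a * (\<Sum>i\<in>I. T i x c))"
      by (rule 3)
  qed
qed

definition K :: "nat \<Rightarrow> nat \<Rightarrow> fr \<Rightarrow> fr" where
  "K m n y = (\<lambda>c. \<Sum>i\<in>{1..m+n}. Lvec i (Lcov m i y) c)"

lemma LIN_K: "LIN (K m n)"
  unfolding K_def
proof (rule LIN_sumT[OF finite_atLeastAtMost])
  fix i
  have "LIN (Lvec i \<circ> Lcov m i)" by (rule LIN_comp[OF LIN_Lvec LIN_Lcov])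
  then show "LIN (\<lambda>y. Lvec i (Lcov m i y))" by (simp only: comp_def)
qed

lemma sq_sign: "((-1::complex) ^ e) * ((-1) ^ e * z) = z"
proof -
  have "(-1::complex)^e * (-1)^e = ((-1)*(-1))^e" by (rule power_mult_distrib[symmetric])
  then have "(-1::complex)^e * (-1)^e = 1" by simp
  then show ?thesis by (simp only: mult.assoc[symmetric]) simp
qed

lemma K_delta: assumes ws: "set w \<subseteq> {1..m+n}" and sg: "\<sigma> \<in> Sinf"
  shows "eqv m n (K m n (delta (w, \<sigma>))) (\<lambda>c. of_nat (length w) * delta (w, \<sigma>) c)"
proof -
  let ?D = "length w"
  let ?sg = "\<lambda>k. (-1::complex) ^ (par m (w ! (k - 1)) * cnt m w k ?D)"
  let ?t = "\<lambda>k i. delta (del w k @ [i], cyc ?D k \<circ> \<sigma>)"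
  have "Lvec i (Lcov m i (delta (w, \<sigma>))) = (\<lambda>c. \<Sum>k\<in>{1..?D}.
        (if w ! (k - 1) = i then ?sg k else 0) * ?t k i c)" for i
    unfolding Lcov_delta by (subst LIN_lincomb[OF LIN_Lvec]) (auto simp: Lvec_delta)
  then have "K m n (delta (w, \<sigma>)) = (\<lambda>c. \<Sum>i\<in>{1..m+n}. \<Sum>k\<in>{1..?D}.
        (if w ! (k - 1) = i then ?sg k else 0) * ?t k i c)"
    by (simp add: K_def)
  also have "\<dots> = (\<lambda>c. \<Sum>k\<in>{1..?D}. \<Sum>i\<in>{1..m+n}.
        (if w ! (k - 1) = i then ?sg k else 0) * ?t k i c)"
    by (rule ext, rule sum.swap)
  also have "\<dots> = (\<lambda>c. \<Sum>k\<in>{1..?D}. ?sg k * ?t k (w ! (k - 1)) c)"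
  proof (rule ext, rule sum.cong[OF refl])
    fix c k assume "k \<in> {1..?D}"
    then have "w ! (k - 1) \<in> set w" by (intro nth_mem) auto
    then have "w ! (k - 1) \<in> {1..m+n}" using ws by blast
    then show "(\<Sum>i\<in>{1..m+n}. (if w ! (k - 1) = i then ?sg k else 0) * ?t k i c) = ?sg k * ?t k (w ! (k - 1)) c"
      by (rule sum_delta_mult[OF finite_atLeastAtMost])
  qed
  finally have eqK: "K m n (delta (w, \<sigma>)) = (\<lambda>c. \<Sum>k\<in>{1..?D}. ?sg k * ?t k (w ! (k - 1)) c)" .
  have "eqv m n (\<lambda>c. \<Sum>k\<in>{1..?D}. ?sg k * ?t k (w ! (k - 1)) c) (\<lambda>c. \<Sum>k\<in>{1..?D}. delta (w, \<sigma>) c)"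
  proof (rule eqv_sum[OF finite_atLeastAtMost])
    fix k assume k: "k \<in> {1..?D}"
    have "eqv m n (delta (rot w k ?D, cyc ?D k \<circ> \<sigma>))
     (\<lambda>c. ?sg k * delta (w, \<sigma>) c)"
      using k ws sg by (intro rot_eqv) auto
    then have "eqv m n (?t k (w ! (k - 1))) (\<lambda>c. ?sg k * delta (w, \<sigma>) c)"
      using k by (simp add: rot_full)
    then have "eqv m n (\<lambda>c. ?sg k * ?t k (w ! (k - 1)) c) (\<lambda>c. ?sg k * (?sg k * delta (w, \<sigma>) c))"
      by (rule eqv_smult)
    then show "eqv m n (\<lambda>c. ?sg k * ?t k (w ! (k - 1)) c) (delta (w, \<sigma>))"
      unfolding sq_sign .
  qed
  then show ?thesis unfolding eqK by simp
qed

lemma eqv_basis: assumes T: "LIN T" and fx: "finite (spt x)"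
  and h: "\<And>b. b \<in> spt x \<Longrightarrow> eqv m n (T (delta b)) (\<lambda>c. a * delta b c)"
  shows "eqv m n (T x) (\<lambda>c. a * x c)"
proof -
  have xe: "x = (\<lambda>c. \<Sum>b\<in>spt x. x b * delta b c)"
  proof
    fix c
    have "(\<Sum>b\<in>spt x. x b * delta b c) = (\<Sum>b\<in>spt x. if b = c then x c else 0)"
      by (rule sum.cong) (auto simp: delta_def)
    also have "\<dots> = x c" using fx by (simp add: sum.delta spt_def)
    finally show "x c = (\<Sum>b\<in>spt x. x b * delta b c)" by simp
  qed
  have "T x = (\<lambda>c. \<Sum>b\<in>spt x. x b * T (delta b) c)"
    by (subst xe, rule LIN_lincomb[OF T fx]) simp
  moreover have "eqv m n (\<lambda>c. \<Sum>b\<in>spt x. x b * T (delta b) c) (\<lambda>c. \<Sum>b\<in>spt x. x b * (a * delta b c))"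
    using fx h by (intro eqv_sum eqv_smult) auto
  moreover have "(\<lambda>c. \<Sum>b\<in>spt x. x b * (a * delta b c)) = (\<lambda>c. a * x c)"
    by (subst (2) xe) (simp add: sum_distrib_left algebra_simps)
  ultimately show ?thesis by simp
qed

lemma K_eqv: assumes "x \<in> Tbar_rep m n d" shows "eqv m n (K m n x) (\<lambda>c. of_nat d * x c)"
  using LIN_K Tbar_fin[OF assms]
proof (rule eqv_basis)
  fix b assume "b \<in> spt x"
  then obtain w \<sigma> where b: "b = (w, \<sigma>)" "(w, \<sigma>) \<in> spt x" by (cases b) auto
  then show "eqv m n (K m n (delta b)) (\<lambda>c. of_nat d * delta b c)"
    using Tbar_supp[OF assms b(2)] K_delta[of w m n \<sigma>] by auto
qed


lemma Lset_fin: "finite {is :: nat list. length is = d \<and> set is \<subseteq> I}" if "finite I"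
  using finite_lists_length_eq[OF that, of d] by (simp add: conj_commute)

lemma Lset_Suc: "{is :: nat list. length is = Suc d \<and> set is \<subseteq> I} =
   (\<lambda>p. fst p @ [snd p]) ` ({is. length is = d \<and> set is \<subseteq> I} \<times> I)"
proof
  show "(\<lambda>p. fst p @ [snd p]) ` ({is. length is = d \<and> set is \<subseteq> I} \<times> I) \<subseteq> {is. length is = Suc d \<and> set is \<subseteq> I}"
    by auto
next
  show "{is :: nat list. length is = Suc d \<and> set is \<subseteq> I} \<subseteq> (\<lambda>p. fst p @ [snd p]) ` ({is. length is = d \<and> set is \<subseteq> I} \<times> I)"
  proof
    fix xs :: "nat list" assume xs: "xs \<in> {is. length is = Suc d \<and> set is \<subseteq> I}"
    then have ne: "xs \<noteq> []" by auto
    then have e: "xs = butlast xs @ [last xs]" by simp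
    have "set (butlast xs) \<subseteq> set xs" "last xs \<in> set xs" using ne by (auto dest: in_set_butlastD)
    then have "(butlast xs, last xs) \<in> {is. length is = d \<and> set is \<subseteq> I} \<times> I" using xs by auto
    then show "xs \<in> (\<lambda>p. fst p @ [snd p]) ` ({is. length is = d \<and> set is \<subseteq> I} \<times> I)"
      using e by (intro image_eqI[of _ _ "(butlast xs, last xs)"]) auto
  qed
qed

lemma Lset_inj: "inj_on (\<lambda>p. fst p @ [snd p]) X"
  by (rule inj_onI) auto

lemma fin_A: "finite (spt y) \<Longrightarrow> finite (spt (A m n d y))"
  unfolding A_def
  by (rule fin_smult, rule fin_sum[OF Lset_fin[OF finite_atLeastAtMost]],
      rule LIN_fin[OF LIN_Lvecs LIN_fin[OF LIN_Lcovs]])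

lemma A_Suc: assumes fx: "finite (spt x)"
  shows "A m n (Suc d) x = (\<lambda>c. (1 / of_nat (Suc d)) * (\<Sum>i\<in>{1..m+n}. Lvec i (A m n d (Lcov m i x)) c))"
proof
  fix c
  let ?I = "{1..m+n}" and ?L = "{is :: nat list. length is = d \<and> set is \<subseteq> {1..m+n}}"
  let ?G = "\<lambda>is i. Lvecs is (Lcovs m is (Lcov m i x))"
  have fL: "finite ?L" by (rule Lset_fin) simp
  have fy: "finite (spt (Lcov m i x))" for i by (rule LIN_fin[OF LIN_Lcov fx])
  have "(\<Sum>is\<in>{is. length is = Suc d \<and> set is \<subseteq> ?I}. Lvecs is (Lcovs m is x) c)
      = (\<Sum>p\<in>?L \<times> ?I. Lvecs (fst p @ [snd p]) (Lcovs m (fst p @ [snd p]) x) c)"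
    unfolding Lset_Suc by (subst sum.reindex[OF Lset_inj]) simp
  also have "\<dots> = (\<Sum>p\<in>?L \<times> ?I. Lvec (snd p) (?G (fst p) (snd p)) c)"
    by (simp add: Lvecs_snoc Lcovs_snoc)
  also have "\<dots> = (\<Sum>is\<in>?L. \<Sum>i\<in>?I. Lvec i (?G is i) c)"
    by (rule sum.cartesian_product[symmetric, unfolded split_def])
  also have "\<dots> = (\<Sum>i\<in>?I. \<Sum>is\<in>?L. Lvec i (?G is i) c)"
    by (rule sum.swap)
  also have "\<dots> = (\<Sum>i\<in>?I. of_nat (fact d) * Lvec i (A m n d (Lcov m i x)) c)"
  proof (rule sum.cong[OF refl])
    fix i
    have fG: "finite (spt (?G is i))" for "is"
      by (rule LIN_fin[OF LIN_Lvecs LIN_fin[OF LIN_Lcovs fy]])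
    have "(\<Sum>is\<in>?L. Lvec i (?G is i) c) = Lvec i (\<lambda>c. \<Sum>is\<in>?L. ?G is i c) c"
      using LIN_sum[OF LIN_Lvec fL fG, of i] by simp
    also have "(\<lambda>c. \<Sum>is\<in>?L. ?G is i c) = (\<lambda>c. of_nat (fact d) * A m n d (Lcov m i x) c)"
      by (simp add: A_def)
    also have "Lvec i \<dots> = (\<lambda>c. of_nat (fact d) * Lvec i (A m n d (Lcov m i x)) c)"
      by (rule LIN_smult[OF LIN_Lvec fin_A[OF fy]])
    finally show "(\<Sum>is\<in>?L. Lvec i (?G is i) c) = of_nat (fact d) * Lvec i (A m n d (Lcov m i x)) c" .
  qed
  also have "\<dots> = of_nat (fact d) * (\<Sum>i\<in>?I. Lvec i (A m n d (Lcov m i x)) c)"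
    by (simp add: sum_distrib_left)
  finally have S: "(\<Sum>is\<in>{is. length is = Suc d \<and> set is \<subseteq> ?I}. Lvecs is (Lcovs m is x) c)
     = of_nat (fact d) * (\<Sum>i\<in>?I. Lvec i (A m n d (Lcov m i x)) c)" .
  have fd: "(of_nat (fact d) :: complex) \<noteq> 0" by simp
  show "A m n (Suc d) x c = (1 / of_nat (Suc d)) * (\<Sum>i\<in>?I. Lvec i (A m n d (Lcov m i x)) c)"
  proof -
    have "A m n (Suc d) x c = 1 / of_nat (fact (Suc d)) * (of_nat (fact d) * (\<Sum>i\<in>?I. Lvec i (A m n d (Lcov m i x)) c))"
      using S by (simp only: A_def[of m n "Suc d"])
    also have "(of_nat (fact (Suc d)) :: complex) = of_nat (Suc d) * of_nat (fact d)"
      by (simp only: fact_Suc of_nat_mult of_nat_id)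
    finally show ?thesis using fd by (simp del: of_nat_Suc)
  qed
qed

lemma main: "x \<in> Tbar_rep m n d \<Longrightarrow> eqv m n (A m n d x) x"
proof (induction d arbitrary: x)
  case 0
  have "{is :: nat list. length is = 0 \<and> set is \<subseteq> {1..m+n}} = {[]}" by auto
  then have "A m n 0 x = x" by (simp add: A_def)
  then show ?case by (simp add: eqv_refl)
next
  case (Suc d)
  let ?I = "{1..m+n}"
  have fx: "finite (spt x)" by (rule Tbar_fin[OF Suc.prems])
  have e1: "eqv m n (\<lambda>c. \<Sum>i\<in>?I. Lvec i (A m n d (Lcov m i x)) c) (\<lambda>c. \<Sum>i\<in>?I. Lvec i (Lcov m i x) c)"
  proof (rule eqv_sum[OF finite_atLeastAtMost])
    fix i assume i: "i \<in> ?I"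
    have yT: "Lcov m i x \<in> Tbar_rep m n d" by (rule Lcov_Tbar[OF Suc.prems])
    have fy: "finite (spt (Lcov m i x))" by (rule Tbar_fin[OF yT])
    show "eqv m n (Lvec i (A m n d (Lcov m i x))) (Lvec i (Lcov m i x))"
      by (rule eqv_map[OF LIN_Lvec _ Suc.IH[OF yT] fin_A[OF fy] fy]) (rule Lvec_gen[OF i])
  qed
  have e2: "eqv m n (\<lambda>c. \<Sum>i\<in>?I. Lvec i (Lcov m i x) c) (\<lambda>c. of_nat (Suc d) * x c)"
    using K_eqv[OF Suc.prems] by (simp add: K_def)
  have "eqv m n (\<lambda>c. (1 / of_nat (Suc d)) * (\<Sum>i\<in>?I. Lvec i (A m n d (Lcov m i x)) c))
     (\<lambda>c. (1 / of_nat (Suc d)) * (of_nat (Suc d) * x c))"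
    by (rule eqv_smult[OF eqv_trans[OF e1 e2]])
  moreover have "(\<lambda>c. (1 / of_nat (Suc d)) * (of_nat (Suc d) * x c)) = x"
    by (rule ext) (simp del: of_nat_Suc)
  ultimately show ?case unfolding A_Suc[OF fx] by simp
qed

theorem proposition3p6:
  fixes m n d :: nat and x :: fr
  assumes "1 \<le> m" and "1 \<le> n" and "1 \<le> d"
    and "x \<in> Tbar_rep m n d"
  shows "(\<lambda>c. A m n d x c - x c) \<in> relsp m n"
  using main[OF assms(4)] by (simp add: eqv_def)


end
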